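(* Let $t(z),d(z)\in\mathbb{C}[[z]]$ be such that $t^2-4d$ has a simple zero at $z=0$, and let $A_0(z)\in\mathfrak{gl}_2(\mathbb{C}[[z]])$ satisfy $\operatorname{tr}A_0=t$, $\det A_0=d$. Then (1) $A_0(z)$ is a regular element of $\mathfrak{gl}_2(\mathbb{C}[[z]])$; (2) if $B(z)\in\mathfrak{gl}_2(\mathbb{C}((z)))$ satisfies $[B,A_0]=0$ and $\frac{dB}{dz}\in\mathfrak{gl}_2(\mathbb{C}[[z]])+[A_0,\mathfrak{gl}_2(\mathbb{C}((z)))]$, then $B(z)\in\mathfrak{gl}_2(\mathbb{C}[[z]])$. *)

theory Defs
  imports "HOL-Computational_Algebra.Formal_Laurent_Series"
begin

text \<open>2x2 matrices over a ring: Mat2 a11 a12 a21 a22.\<close>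
datatype 'a mat2 = Mat2 'a 'a 'a 'a

fun m2_map :: "('a \<Rightarrow> 'b) \<Rightarrow> 'a mat2 \<Rightarrow> 'b mat2" where
  "m2_map f (Mat2 a b c d) = Mat2 (f a) (f b) (f c) (f d)"

fun m2_entries :: "'a mat2 \<Rightarrow> 'a set" where
  "m2_entries (Mat2 a b c d) = {a, b, c, d}"

fun m2_add :: "'a::plus mat2 \<Rightarrow> 'a mat2 \<Rightarrow> 'a mat2" where
  "m2_add (Mat2 a b c d) (Mat2 a' b' c' d') = Mat2 (a + a') (b + b') (c + c') (d + d')"

fun m2_sub :: "'a::minus mat2 \<Rightarrow> 'a mat2 \<Rightarrow> 'a mat2" where
  "m2_sub (Mat2 a b c d) (Mat2 a' b' c' d') = Mat2 (a - a') (b - b') (c - c') (d - d')"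

fun m2_mult :: "'a::{plus,times} mat2 \<Rightarrow> 'a mat2 \<Rightarrow> 'a mat2" where
  "m2_mult (Mat2 a b c d) (Mat2 a' b' c' d') =
     Mat2 (a * a' + b * c') (a * b' + b * d') (c * a' + d * c') (c * b' + d * d')"

fun m2_smult :: "'a::times \<Rightarrow> 'a mat2 \<Rightarrow> 'a mat2" where
  "m2_smult k (Mat2 a b c d) = Mat2 (k * a) (k * b) (k * c) (k * d)"

definition m2_one :: "'a::{zero,one} mat2" where
  "m2_one = Mat2 1 0 0 1"

definition m2_zero :: "'a::zero mat2" where
  "m2_zero = Mat2 0 0 0 0"

fun m2_trace :: "'a::plus mat2 \<Rightarrow> 'a" where
  "m2_trace (Mat2 a b c d) = a + d"

fun m2_det :: "'a::{minus,times} mat2 \<Rightarrow> 'a" where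
  "m2_det (Mat2 a b c d) = a * d - b * c"

definition m2_bracket :: "'a::{minus,plus,times} mat2 \<Rightarrow> 'a mat2 \<Rightarrow> 'a mat2" where
  "m2_bracket X Y = m2_sub (m2_mult X Y) (m2_mult Y X)"

text \<open>A matrix M in gl_2(k), k a field, is regular iff its minimal polynomial equals
  its characteristic polynomial (degree 2), i.e. 1 and M are linearly independent.\<close>
definition m2_regular :: "'a::field mat2 \<Rightarrow> bool" where
  "m2_regular M \<longleftrightarrow>
     (\<forall>a b. m2_add (m2_smult a m2_one) (m2_smult b M) = m2_zero \<longrightarrow> a = 0 \<and> b = 0)"

definition gl2_fps_regular :: "'a::field fps mat2 \<Rightarrow> bool" where
  "gl2_fps_regular A \<longleftrightarrow> m2_regular (m2_map (\<lambda>f. f $ 0) A)"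

definition m2_integral :: "'a::field fls mat2 \<Rightarrow> bool" where
  "m2_integral M \<longleftrightarrow> (\<forall>x \<in> m2_entries M. x \<in> range fps_to_fls)"

end

theory Submission
  imports Defs
begin
unbundle fps_syntax

lemma integ_iff: "(x::'a::zero fls) \<in> range fps_to_fls \<longleftrightarrow> (\<forall>n<0. x $$ n = 0)"
proof
  assume "x \<in> range fps_to_fls" then show "\<forall>n<0. x $$ n = 0" by auto
next
  assume "\<forall>n<0. x $$ n = 0"
  then have "fls_subdegree x \<ge> 0" by (intro fls_subdegree_ge0I) auto
  then have "x = fps_to_fls (fls_regpart x)" by simp
  then show "x \<in> range fps_to_fls" by blast
qed

lemma key:
  fixes y :: "complex fls" and \<delta> :: "complex fps"
  assumes sd: "subdegree \<delta> = 1"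
    and h: "2 * fls_deriv y * fps_to_fls \<delta> + y * fps_to_fls (fps_deriv \<delta>) \<in> range fps_to_fls"
  shows "y \<in> range fps_to_fls"
proof (rule ccontr)
  assume ny: "y \<notin> range fps_to_fls"
  define m where "m = fls_subdegree y"
  have y0: "y \<noteq> 0"
  proof
    assume "y = 0" then have "y = fps_to_fls 0" by simp
    then show False using ny by blast
  qed
  have "\<not> (\<forall>n<0. y $$ n = 0)" using ny integ_iff by blast
  then obtain n where "n < 0" "y $$ n \<noteq> 0" by blast
  then have mneg: "m < 0" unfolding m_def using fls_subdegree_leI by fastforce
  have d0: "\<delta> \<noteq> 0" using sd by (metis subdegree_0 zero_neq_one)
  have d1: "\<delta> $ 1 \<noteq> 0" using sd by (metis d0 nth_subdegree_nonzero)
  have sdD: "fls_subdegree (fps_to_fls \<delta>) = 1" using sd by (simp add: fls_subdegree_fls_to_fps)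
  have "fps_deriv \<delta> $ 0 = \<delta> $ 1" by simp
  then have sdd: "fls_subdegree (fps_to_fls (fps_deriv \<delta>)) = 0"
    using d1 by (intro fls_subdegree_eqI) auto
  have sdy': "fls_subdegree (fls_deriv y) = m - 1" unfolding m_def
    using mneg m_def by (intro fls_subdegree_deriv) simp
  have c1: "(fls_deriv y * fps_to_fls \<delta>) $$ m = of_int m * y $$ m * \<delta> $ 1"
    using fls_times_base[of "fls_deriv y" "fps_to_fls \<delta>"] sdy' sdD by simp
  have c2: "(y * fps_to_fls (fps_deriv \<delta>)) $$ m = y $$ m * \<delta> $ 1"
    using fls_times_base[of y "fps_to_fls (fps_deriv \<delta>)"] sdd m_def by simp
  have "(2 * fls_deriv y * fps_to_fls \<delta> + y * fps_to_fls (fps_deriv \<delta>)) $$ m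
        = (2 * of_int m + 1) * y $$ m * \<delta> $ 1"
  proof -
    have e: "2 * fls_deriv y * fps_to_fls \<delta> = (fls_deriv y * fps_to_fls \<delta>) + (fls_deriv y * fps_to_fls \<delta>)"
      by (metis mult.assoc mult_2)
    show ?thesis by (simp only: e fls_plus_nth c1 c2) (simp add: algebra_simps)
  qed
  moreover have "(2 * of_int m + 1 :: complex) \<noteq> 0"
  proof
    assume "(2 * of_int m + 1 :: complex) = 0"
    then have "of_int (2*m+1) = (0::complex)" by simp
    then have "2*m+1 = 0" using of_int_eq_0_iff by blast
    then show False by presburger
  qed
  moreover have "y $$ m \<noteq> 0" using y0 m_def by simp
  ultimately have "(2 * fls_deriv y * fps_to_fls \<delta> + y * fps_to_fls (fps_deriv \<delta>)) $$ m \<noteq> 0"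
    using d1 by simp
  then show False using h mneg integ_iff by blast
qed

lemma deriv_integ:
  fixes x :: "complex fls"
  assumes "fls_deriv x \<in> range fps_to_fls"
  shows "x \<in> range fps_to_fls"
proof -
  have "\<forall>n<0. x $$ n = 0"
  proof (intro allI impI)
    fix n :: int assume n: "n < 0"
    obtain g where g: "fls_deriv x = fps_to_fls g" using assms by blast
    have "fls_deriv x $$ (n-1) = 0" using n by (simp add: g)
    then have "of_int n * x $$ n = 0" by simp
    then show "x $$ n = 0" using n by simp
  qed
  then show ?thesis using integ_iff by blast
qed

lemma integ_add: "x \<in> range fps_to_fls \<Longrightarrow> y \<in> range fps_to_fls \<Longrightarrow> x + y \<in> range fps_to_fls"
  by (auto simp flip: fps_to_fls_plus)
lemma integ_diff: "x \<in> range fps_to_fls \<Longrightarrow> y \<in> range fps_to_fls \<Longrightarrow> x - y \<in> range fps_to_fls"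
  by (auto simp flip: fps_to_fls_minus)
lemma integ_mult: "(x::'a::comm_ring_1 fls) \<in> range fps_to_fls \<Longrightarrow> y \<in> range fps_to_fls \<Longrightarrow> x * y \<in> range fps_to_fls"
  by (auto simp flip: fls_times_fps_to_fls)
lemma integ_of: "fps_to_fls x \<in> range fps_to_fls" by blast
lemma integ_num: "(numeral n :: 'a::comm_ring_1 fls) \<in> range fps_to_fls"
  by (metis fps_to_fls_numeral range_eqI)
lemma integ_half: "(x::complex fls) + x \<in> range fps_to_fls \<Longrightarrow> x \<in> range fps_to_fls"
  unfolding integ_iff by auto

theorem lemma4p1:
  fixes t d :: "complex fps" and A0 :: "complex fps mat2"
  assumes simple_zero: "subdegree (t\<^sup>2 - 4 * d) = 1"
    and tr: "m2_trace A0 = t"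
    and det: "m2_det A0 = d"
  shows "gl2_fps_regular A0 \<and>
         (\<forall>B :: complex fls mat2.
           m2_bracket B (m2_map fps_to_fls A0) = m2_zero \<and>
           (\<exists>P Q. m2_integral P \<and>
              m2_map fls_deriv B = m2_add P (m2_bracket (m2_map fps_to_fls A0) Q)) \<longrightarrow>
           m2_integral B)"
proof -
  obtain a b c e where A0: "A0 = Mat2 a b c e" by (cases A0)
  define \<delta> where "\<delta> = t\<^sup>2 - 4 * d"
  have tt: "t = a + e" using tr A0 by simp
  have dd: "d = a * e - b * c" using det A0 by simp
  have dl: "\<delta> = (a - e)^2 + 4 * b * c"
    unfolding \<delta>_def tt dd by (simp add: power2_eq_square algebra_simps)
  have sd: "subdegree \<delta> = 1" using simple_zero \<delta>_def by simp
  have d0: "\<delta> \<noteq> 0" using sd by (metis subdegree_0 zero_neq_one)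
  have d1: "\<delta> $ 1 \<noteq> 0" using sd by (metis d0 nth_subdegree_nonzero)
  have part1: "gl2_fps_regular A0"
    unfolding gl2_fps_regular_def m2_regular_def A0
  proof (intro allI impI)
    fix \<alpha> \<beta> :: complex
    assume h: "m2_add (m2_smult \<alpha> m2_one) (m2_smult \<beta> (m2_map (\<lambda>f. f $ 0) (Mat2 a b c e))) = m2_zero"
    then have h1: "\<alpha> + \<beta> * a $ 0 = 0" and h2: "\<beta> * b $ 0 = 0" and h3: "\<beta> * c $ 0 = 0"
      and h4: "\<alpha> + \<beta> * e $ 0 = 0"
      by (simp_all add: m2_one_def m2_zero_def)
    show "\<alpha> = 0 \<and> \<beta> = 0"
    proof (cases "\<beta> = 0")
      case True then show ?thesis using h1 by simp
    next
      case False
      have "\<beta> * a $ 0 = \<beta> * e $ 0" using h1 h4 by (metis add_left_cancel)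
      then have "b $ 0 = 0" "c $ 0 = 0" "a $ 0 = e $ 0" using False h2 h3 by auto
      moreover have "\<delta> $ 1 = 2 * (a$0 - e$0) * (a$1 - e$1) + 4 * (b$0 * c$1 + b$1 * c$0)"
        unfolding dl by (simp add: power2_eq_square fps_mult_nth fps_numeral_nth algebra_simps)
      ultimately have "\<delta> $ 1 = 0" by simp
      then show ?thesis using d1 by simp
    qed
  qed
  have part2: "m2_integral B"
    if hB: "m2_bracket B (m2_map fps_to_fls A0) = m2_zero"
      and hP: "m2_integral P"
      and hD: "m2_map fls_deriv B = m2_add P (m2_bracket (m2_map fps_to_fls A0) Q)"
    for B P Q :: "complex fls mat2"
  proof -
    obtain u v w s where B: "B = Mat2 u v w s" by (cases B)
    obtain p1 p2 p3 p4 where P: "P = Mat2 p1 p2 p3 p4" by (cases P)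
    obtain q1 q2 q3 q4 where Q: "Q = Mat2 q1 q2 q3 q4" by (cases Q)
    define a' b' c' e' where ldefs: "a' = fps_to_fls a" "b' = fps_to_fls b" "c' = fps_to_fls c" "e' = fps_to_fls e"
    have ip: "p1 \<in> range fps_to_fls" "p2 \<in> range fps_to_fls" "p3 \<in> range fps_to_fls" "p4 \<in> range fps_to_fls"
      using hP unfolding P m2_integral_def by auto
    note hh = hB[unfolded B A0 m2_bracket_def m2_zero_def, simplified, unfolded ldefs[symmetric]]
    note dd = hD[unfolded B A0 P Q m2_bracket_def, simplified, unfolded ldefs[symmetric]]
    from hh have c1: "v * c' = b' * w" and c2: "u * b' + v * e' = a' * v + b' * s"
      and c3: "w * a' + s * c' = c' * u + e' * w" by auto
    from dd have du: "fls_deriv u = p1 + (b' * q3 - q2 * c')"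
      and dv: "fls_deriv v = p2 + (a' * q2 + b' * q4 - (q1 * b' + q2 * e'))"
      and dw: "fls_deriv w = p3 + (c' * q1 + e' * q3 - (q3 * a' + q4 * c'))"
      and ds: "fls_deriv s = p4 + (c' * q2 - q3 * b')" by auto
    have iu: "a' \<in> range fps_to_fls" "b' \<in> range fps_to_fls" "c' \<in> range fps_to_fls" "e' \<in> range fps_to_fls"
      using ldefs by auto
    have hus: "fls_deriv (u + s) = p1 + p4" using du ds by simp
    have ius: "u + s \<in> range fps_to_fls" by (rule deriv_integ, unfold hus) (simp add: ip integ_add)
    define D where "D = a' - e'"
    define \<sigma> where "\<sigma> = u - s"
    define Y where "Y = D * \<sigma> + 2 * b' * w + 2 * c' * v"
    define \<Delta> where "\<Delta> = D * D + 4 * b' * c'"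
    have \<Delta>eq: "\<Delta> = fps_to_fls \<delta>"
      unfolding \<Delta>_def dl D_def ldefs by (simp add: fps_to_fls_power fls_times_fps_to_fls power2_eq_square)
    have \<Delta>0: "\<Delta> \<noteq> 0" using d0 \<Delta>eq by simp
    define y where "y = Y / \<Delta>"
    have e1: "b' * \<sigma> = v * D" using c2 unfolding \<sigma>_def D_def by (simp add: algebra_simps)
    have e2: "w * D = c' * \<sigma>" using c3 unfolding \<sigma>_def D_def by (simp add: algebra_simps)
    have z1: "D * w - c' * \<sigma> = 0" using e2 by (simp add: algebra_simps)
    have z2: "D * v - b' * \<sigma> = 0" using e1 by (simp add: algebra_simps)
    have z3: "b' * w - c' * v = 0" using c1 by (simp add: algebra_simps)
    have "D * Y - \<Delta> * \<sigma> = 2 * b' * (D * w - c' * \<sigma>) + 2 * c' * (D * v - b' * \<sigma>)"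
      unfolding Y_def \<Delta>_def by (simp add: algebra_simps)
    then have "D * Y - \<Delta> * \<sigma> = 0" unfolding z1 z2 by simp
    then have "D * Y = \<Delta> * \<sigma>" by simp
    then have s\<sigma>: "\<sigma> = y * D" unfolding y_def using \<Delta>0 by (simp add: field_simps)
    have "b' * Y - \<Delta> * v = - D * (D * v - b' * \<sigma>) + 2 * b' * (b' * w - c' * v)"
      unfolding Y_def \<Delta>_def by (simp add: algebra_simps)
    then have "b' * Y - \<Delta> * v = 0" unfolding z2 z3 by simp
    then have "b' * Y = \<Delta> * v" by simp
    then have sv: "v = y * b'" unfolding y_def using \<Delta>0 by (simp add: field_simps)
    have "c' * Y - \<Delta> * w = - D * (D * w - c' * \<sigma>) - 2 * c' * (b' * w - c' * v)"
      unfolding Y_def \<Delta>_def by (simp add: algebra_simps)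
    then have "c' * Y - \<Delta> * w = 0" unfolding z1 z3 by simp
    then have "c' * Y = \<Delta> * w" by simp
    then have sw: "w = y * c'" unfolding y_def using \<Delta>0 by (simp add: field_simps)
    define T where "T = D * fls_deriv \<sigma> + 2 * b' * fls_deriv w + 2 * c' * fls_deriv v"
    have "T = D * (p1 - p4) + 2 * b' * p3 + 2 * c' * p2"
      unfolding T_def \<sigma>_def fls_deriv_sub du dv dw ds D_def by (simp add: algebra_simps)
    then have iT: "T \<in> range fps_to_fls" using ip iu unfolding D_def
      by (simp add: integ_add integ_diff integ_mult integ_num)
    have "2 * T = 2 * fls_deriv y * \<Delta> + y * fls_deriv \<Delta>"
      unfolding T_def s\<sigma> sv sw \<Delta>_def by (simp add: algebra_simps)
    also have "\<dots> = 2 * fls_deriv y * fps_to_fls \<delta> + y * fps_to_fls (fps_deriv \<delta>)"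
      by (simp add: \<Delta>eq fls_deriv_fps_to_fls)
    finally have "2 * fls_deriv y * fps_to_fls \<delta> + y * fps_to_fls (fps_deriv \<delta>) \<in> range fps_to_fls"
      using iT by (metis integ_mult integ_num)
    then have iy: "y \<in> range fps_to_fls" using key sd by blast
    have i\<sigma>: "\<sigma> \<in> range fps_to_fls" unfolding s\<sigma> D_def using iy iu by (simp add: integ_mult integ_diff)
    have iv: "v \<in> range fps_to_fls" unfolding sv using iy iu by (simp add: integ_mult)
    have iw: "w \<in> range fps_to_fls" unfolding sw using iy iu by (simp add: integ_mult)
    have "u + u = (u + s) + \<sigma>" unfolding \<sigma>_def by simp
    then have iuu: "u \<in> range fps_to_fls" using ius i\<sigma> integ_half integ_add by metis
    have "s + s = (u + s) - \<sigma>" unfolding \<sigma>_def by simp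
    then have iss: "s \<in> range fps_to_fls" using ius i\<sigma> integ_half integ_diff by metis
    show ?thesis unfolding B m2_integral_def using iuu iv iw iss by simp
  qed
  show ?thesis using part1 part2 by blast
qed

end
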